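(* There is $C_0=C_0(N)>0$ such that for every $T>0$, every $f\in\mathcal{VT}_1^+(T)$ and every $\mathbf{x}_0\in\mathbb{R}^N$, $$f(\mathbf{x}_0)\le C_0T^{-\frac N2}\int_{B_{\sqrt T}(\mathbf{x}_0)}f\,d\mathcal{L}^N\le C_0T^{-\frac N2}.$$
   Context: For positive $U\in C^2(\mathbb{R}^N)$, $\tau(U)=\sup\{\tau\ge0:2\tau\nabla^2\log U+g_{\mathbb{R}}\ge0\}$ (inequality of symmetric matrices); $\mathcal{VT}_1^+(T)=\{u\in C^2\cap L^1(\mathbb{R}^N):u>0,\tau(u)\ge T,\int_{\mathbb{R}^N}u\,d\mathcal{L}^N=1\}$. *)

theory Defs
  imports "HOL-Analysis.Analysis"
begin

definition dderiv :: "('a::euclidean_space \<Rightarrow> real) \<Rightarrow> 'a \<Rightarrow> 'a \<Rightarrow> real" where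
  "dderiv f v x = frechet_derivative f (at x) v"

definition hess :: "('a::euclidean_space \<Rightarrow> real) \<Rightarrow> 'a \<Rightarrow> 'a \<Rightarrow> 'a \<Rightarrow> real" where
  "hess f x v w = dderiv (dderiv f v) w x"

definition C2 :: "('a::euclidean_space \<Rightarrow> real) \<Rightarrow> bool" where
  "C2 f \<longleftrightarrow> (\<forall>x. f differentiable (at x))
     \<and> (\<forall>v x. (dderiv f v) differentiable (at x))
     \<and> (\<forall>v w. continuous_on UNIV (\<lambda>x. hess f x v w))"

definition tau :: "('a::euclidean_space \<Rightarrow> real) \<Rightarrow> ereal" where
  "tau U = (SUP t \<in> {t::real. t \<ge> 0 \<and>
      (\<forall>x v. 2 * t * hess (\<lambda>y. ln (U y)) x v v + inner v v \<ge> 0)}. ereal t)"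

definition VT1 :: "real \<Rightarrow> ('a::euclidean_space \<Rightarrow> real) set" where
  "VT1 T = {u. C2 u \<and> integrable lborel u \<and> (\<forall>x. u x > 0) \<and> tau u \<ge> ereal T
              \<and> (\<integral>x. u x \<partial>lborel) = 1}"

end

theory Submission
  imports Defs
begin

lemma line_deriv:
  fixes g :: "'a::euclidean_space \<Rightarrow> real"
  assumes "g differentiable at (x0 + s *\<^sub>R h)"
  shows "((\<lambda>s. g (x0 + s *\<^sub>R h)) has_real_derivative dderiv g h (x0 + s *\<^sub>R h)) (at s)"
proof -
  let ?D = "frechet_derivative g (at (x0 + s *\<^sub>R h))"
  have g: "(g has_derivative ?D) (at (x0 + s *\<^sub>R h))"
    using assms frechet_derivative_works by blast
  have lin: "linear ?D" using assms linear_frechet_derivative by blast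
  have l: "((\<lambda>s. x0 + s *\<^sub>R h) has_derivative (\<lambda>t. t *\<^sub>R h)) (at s)"
    by (auto intro!: derivative_eq_intros)
  have "((\<lambda>s. g (x0 + s *\<^sub>R h)) has_derivative (\<lambda>t. ?D (t *\<^sub>R h))) (at s)"
    using diff_chain_at[OF l g] by (simp add: o_def)
  moreover have "(\<lambda>t. ?D (t *\<^sub>R h)) = (*) (dderiv g h (x0 + s *\<^sub>R h))"
    using lin by (auto simp: dderiv_def linear_cmul)
  ultimately show ?thesis unfolding has_field_derivative_def by metis
qed

lemma tau_bound:
  fixes u :: "'a::euclidean_space \<Rightarrow> real"
  assumes "tau u \<ge> ereal T" "T > 0"
  shows "2*T*hess (\<lambda>y. ln (u y)) x v v + inner v v \<ge> 0"
proof (rule ccontr)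
  let ?H = "hess (\<lambda>y. ln (u y)) x v v"
  assume "\<not> ?thesis"
  hence neg: "2*T*?H + inner v v < 0" by simp
  have vv: "inner v v \<ge> 0" by simp
  have "2*T*?H < 0" using neg vv by linarith
  hence H: "?H < 0" using assms(2) by (simp add: mult_less_0_iff)
  have "tau u \<le> ereal (inner v v / (-2*?H))"
    unfolding tau_def
  proof (rule SUP_least)
    fix t assume "t \<in> {t::real. t \<ge> 0 \<and>
      (\<forall>x v. 2 * t * hess (\<lambda>y. ln (u y)) x v v + inner v v \<ge> 0)}"
    hence "2*t*?H + inner v v \<ge> 0" by blast
    hence "t * (-2*?H) \<le> inner v v" by (simp add: algebra_simps)
    moreover have p: "-2*?H > 0" using H by simp
    ultimately have "t \<le> inner v v / (-2*?H)" by (simp only: pos_le_divide_eq)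
    thus "ereal t \<le> ereal (inner v v / (-2*?H))" by (simp only: ereal_less_eq)
  qed
  moreover have "inner v v / (-2*?H) < T"
  proof -
    have p: "-2*?H > 0" using H by simp
    have "inner v v < T * (-2*?H)" using neg by (simp add: algebra_simps)
    thus ?thesis by (simp only: pos_divide_less_eq[OF p])
  qed
  ultimately show False using assms(1)
    by (metis ereal_less_eq(3) linorder_not_le order_trans)
qed

lemma dderiv_ln:
  fixes u :: "'a::euclidean_space \<Rightarrow> real"
  assumes "C2 u" "\<And>x. u x > 0"
  shows "dderiv (\<lambda>y. ln (u y)) v = (\<lambda>x. dderiv u v x / u x)"
    and "\<And>x. (\<lambda>y. ln (u y)) differentiable at x"
proof -
  fix x
  have d: "(u has_derivative frechet_derivative u (at x)) (at x)" for x
    using assms(1) unfolding C2_def using frechet_derivative_works by blast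
  have l: "((\<lambda>y. ln (u y)) has_derivative (\<lambda>v. frechet_derivative u (at x) v / u x)) (at x)" for x
    using has_derivative_ln[OF assms(2)[of x] d[of x]] by (simp add: field_simps)
  show "dderiv (\<lambda>y. ln (u y)) v = (\<lambda>x. dderiv u v x / u x)"
  proof (rule ext)
    fix x
    have e: "frechet_derivative (\<lambda>y. ln (u y)) (at x) = (\<lambda>v. frechet_derivative u (at x) v / u x)"
      by (rule frechet_derivative_at[OF l, symmetric])
    show "dderiv (\<lambda>y. ln (u y)) v x = dderiv u v x / u x" unfolding dderiv_def e by simp
  qed
  show "(\<lambda>y. ln (u y)) differentiable at x" for x using l differentiable_def by blast
qed

lemma pointwise:
  fixes f :: "'a::euclidean_space \<Rightarrow> real"
  assumes "f \<in> VT1 T" "T > 0" "norm h < sqrt T"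
  shows "f x0 \<le> exp (1/4) * ((f (x0 + h) + f (x0 - h)) / 2)"
proof -
  have C2: "C2 f" and pos: "\<And>x. f x > 0" and tau: "tau f \<ge> ereal T"
    using assms(1) unfolding VT1_def by auto
  define L where "L = (\<lambda>y. ln (f y))"
  define c where "c = inner h h / (4*T)"
  have D1: "dderiv L h = (\<lambda>x. dderiv f h x / f x)"
    unfolding L_def by (rule dderiv_ln[OF C2 pos])
  have Ld: "L differentiable at x" for x
    unfolding L_def by (rule dderiv_ln[OF C2 pos])
  have D1d: "dderiv L h differentiable at x" for x
    unfolding D1 using C2 pos unfolding C2_def
    by (intro differentiable_divide) (auto simp: less_imp_neq[symmetric])
  define \<psi> where "\<psi> = (\<lambda>s. L (x0 + s *\<^sub>R h) + s^2 * c)"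
  define \<psi>' where "\<psi>' = (\<lambda>s. dderiv L h (x0 + s *\<^sub>R h) + 2 * s * c)"
  define \<psi>'' where "\<psi>'' = (\<lambda>s. hess L (x0 + s *\<^sub>R h) h h + 2 * c)"
  have q: "((\<lambda>s. s^2 * c) has_real_derivative 2 * s * c) (at s)" for s
    by (auto intro!: derivative_eq_intros)
  have q2: "((\<lambda>s. 2 * s * c) has_real_derivative 2 * c) (at s)" for s
    by (auto intro!: derivative_eq_intros)
  have d1: "(\<psi> has_real_derivative \<psi>' s) (at s)" for s
    unfolding \<psi>_def \<psi>'_def by (intro DERIV_add line_deriv Ld q)
  have d2: "(\<psi>' has_real_derivative \<psi>'' s) (at s)" for s
    unfolding \<psi>'_def \<psi>''_def hess_def by (intro DERIV_add line_deriv D1d q2)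
  have nn: "\<psi>'' s \<ge> 0" for s
  proof -
    have "2*T*hess L (x0 + s *\<^sub>R h) h h + inner h h \<ge> 0"
      unfolding L_def by (rule tau_bound[OF tau assms(2)])
    hence "2*T*(hess L (x0 + s *\<^sub>R h) h h + 2*c) \<ge> 0"
      using assms(2) by (simp add: c_def algebra_simps)
    thus ?thesis unfolding \<psi>''_def using assms(2) by (simp add: zero_le_mult_iff)
  qed
  have cv: "convex_on UNIV \<psi>"
    by (rule f''_ge0_imp_convex[of UNIV \<psi> \<psi>' \<psi>'']) (use d1 d2 nn in auto)
  have "\<psi> ((1 - 1/2) *\<^sub>R 1 + (1/2) *\<^sub>R (-1)) \<le> (1 - 1/2) * \<psi> 1 + (1/2) * \<psi> (-1)"
    by (rule convex_onD[OF cv]) auto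
  hence ineq: "ln (f x0) \<le> (ln (f (x0 + h)) + ln (f (x0 - h))) / 2 + c"
    unfolding \<psi>_def L_def by (simp add: algebra_simps add_divide_distrib)
  have "norm h ^ 2 < sqrt T ^ 2" by (rule power_strict_mono) (use assms(3) in auto)
  hence "inner h h < T" using assms(2) by (simp add: power2_norm_eq_inner)
  hence c4: "c < 1/4" unfolding c_def using assms(2) by (simp add: divide_less_eq)
  let ?a = "f (x0 + h)" and ?b = "f (x0 - h)"
  have ab: "?a > 0" "?b > 0" using pos by auto
  have "(ln ?a + ln ?b) / 2 = ln (sqrt (?a * ?b))"
    using ab by (simp add: ln_sqrt ln_mult)
  also have "\<dots> \<le> ln ((?a + ?b)/2)"
    using ab arith_geo_mean_sqrt[of ?a ?b] by simp
  finally have "ln (f x0) \<le> ln ((?a + ?b)/2) + 1/4" using ineq c4 by linarith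
  also have "\<dots> = ln (exp (1/4) * ((?a + ?b)/2))"
  proof -
    have "ln (exp (1/4) * ((?a + ?b)/2)) = ln (exp (1/4)) + ln ((?a + ?b)/2)"
      by (rule ln_mult_pos) (use ab in auto)
    thus ?thesis by simp
  qed
  finally show ?thesis using ab pos[of x0] by (simp add: ln_le_cancel_iff)
qed

lemma reflect_integral:
  fixes g :: "'a::euclidean_space \<Rightarrow> real"
  assumes "integrable lborel g"
  shows "integrable lborel (\<lambda>y. g ((2::real) *\<^sub>R x0 + (-1) *\<^sub>R y))"
    and "(\<integral>y. g ((2::real) *\<^sub>R x0 + (-1) *\<^sub>R y) \<partial>lborel) = (\<integral>y. g y \<partial>lborel)"
proof -
  let ?\<rho> = "\<lambda>y::'a. (2::real) *\<^sub>R x0 + (-1) *\<^sub>R y"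
  have D: "distr lborel borel ?\<rho> = lborel"
    using lborel_affine[of "-1" "(2::real) *\<^sub>R x0"] by (simp add: density_1)
  have m: "?\<rho> \<in> measurable lborel borel" by simp
  have gm: "g \<in> borel_measurable borel" using assms by simp
  show "integrable lborel (\<lambda>y. g (?\<rho> y))"
    using integrable_distr_eq[OF m gm] D assms by simp
  show "(\<integral>y. g (?\<rho> y) \<partial>lborel) = (\<integral>y. g y \<partial>lborel)"
    using integral_distr[OF m gm] D by simp
qed

theorem mainTheorem14:
  shows "\<exists>C0::real. C0 > 0 \<and>
    (\<forall>T::real. T > 0 \<longrightarrow> (\<forall>f \<in> (VT1 T :: ('a::euclidean_space \<Rightarrow> real) set). \<forall>x0::'a.
       f x0 \<le> C0 * T powr (- real DIM('a) / 2) * (\<integral>x\<in>ball x0 (sqrt T). f x \<partial>lborel)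
     \<and> C0 * T powr (- real DIM('a) / 2) * (\<integral>x\<in>ball x0 (sqrt T). f x \<partial>lborel)
         \<le> C0 * T powr (- real DIM('a) / 2)))"
proof -
  define \<omega> where "\<omega> = unit_ball_vol (real DIM('a))"
  have \<omega>: "\<omega> > 0" unfolding \<omega>_def by simp
  define C0 where "C0 = exp (1/4) / \<omega>"
  have C0: "C0 > 0" unfolding C0_def using \<omega> by simp
  have main: "f x0 \<le> C0 * T powr (- real DIM('a) / 2) * (\<integral>x\<in>ball x0 (sqrt T). f x \<partial>lborel)
     \<and> C0 * T powr (- real DIM('a) / 2) * (\<integral>x\<in>ball x0 (sqrt T). f x \<partial>lborel)
         \<le> C0 * T powr (- real DIM('a) / 2)"
    if T: "T > 0" and f: "f \<in> (VT1 T :: ('a \<Rightarrow> real) set)" for T f x0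
  proof -
    have int: "integrable lborel f" and pos: "\<And>x. f x > 0" and one: "(\<integral>x. f x \<partial>lborel) = 1"
      using f unfolding VT1_def by auto
    define B where "B = ball x0 (sqrt T)"
    let ?\<rho> = "\<lambda>y::'a. (2::real) *\<^sub>R x0 + (-1) *\<^sub>R y"
    define I where "I = (\<integral>x. indicator B x * f x \<partial>lborel)"
    have Iset: "(\<integral>x\<in>ball x0 (sqrt T). f x \<partial>lborel) = I"
      unfolding I_def B_def set_lebesgue_integral_def by simp
    have Bs: "B \<in> sets lborel" unfolding B_def by simp
    have Bfin: "emeasure lborel B < \<infinity>" unfolding B_def by (rule emeasure_lborel_ball_finite)
    have mB: "measure lborel B = \<omega> * T powr (real DIM('a) / 2)"
    proof -
      have "measure lborel B = \<omega> * sqrt T ^ DIM('a)"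
        unfolding B_def \<omega>_def measure_def using T by (simp add: emeasure_ball)
      also have "sqrt T ^ DIM('a) = T powr (real DIM('a) / 2)"
        using T by (simp add: real_sqrt_power powr_half_sqrt_powr powr_realpow)
      finally show ?thesis .
    qed
    have gi: "integrable lborel (\<lambda>x. indicator B x * f x)"
      using integrable_mult_indicator[OF Bs int] by simp
    note R = reflect_integral[OF gi, of x0]
    have refl_ind: "indicator B (?\<rho> y) = (indicator B y :: real)" for y
    proof -
      have e: "x0 - ?\<rho> y = y - x0" by (simp add: scaleR_2 algebra_simps)
      have "dist x0 (?\<rho> y) = dist x0 y"
        unfolding dist_norm e by (rule norm_minus_commute)
      thus ?thesis unfolding B_def by (simp add: indicator_def)
    qed
    have pw: "indicator B y * f x0 \<le> exp (1/4) / 2 * (indicator B y * f y + indicator B (?\<rho> y) * f (?\<rho> y))" for y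
    proof (cases "y \<in> B")
      case True
      hence "norm (y - x0) < sqrt T" unfolding B_def by (simp add: dist_norm norm_minus_commute)
      have e2: "x0 - (y - x0) = ?\<rho> y" by (simp add: scaleR_2 algebra_simps)
      have e3: "x0 + (y - x0) = y" by simp
      from pointwise[OF f T \<open>norm (y - x0) < sqrt T\<close>, of x0]
      have "f x0 \<le> exp (1/4) * ((f y + f (?\<rho> y)) / 2)"
        unfolding e2 e3 .
      thus ?thesis using True refl_ind[of y] by (simp add: indicator_def)
    qed (use refl_ind in \<open>simp add: indicator_def\<close>)
    have "measure lborel B * f x0 = (\<integral>y. indicator B y * f x0 \<partial>lborel)"
      using Bs by simp
    also have "\<dots> \<le> (\<integral>y. exp (1/4) / 2 * (indicator B y * f y + indicator B (?\<rho> y) * f (?\<rho> y)) \<partial>lborel)"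
      by (rule integral_mono) (use pw gi R(1) Bs Bfin in auto)
    also have "\<dots> = exp (1/4) / 2 * (I + I)"
      using gi R unfolding I_def by simp
    finally have "measure lborel B * f x0 \<le> exp (1/4) * I" by simp
    hence ineq1: "\<omega> * T powr (real DIM('a) / 2) * f x0 \<le> exp (1/4) * I" using mB by simp
    have Tp: "T powr (- real DIM('a) / 2) = 1 / T powr (real DIM('a) / 2)"
      using powr_minus_divide[of T "real DIM('a) / 2"] by simp
    have Tpos: "T powr (real DIM('a) / 2) > 0" using T by simp
    have first: "f x0 \<le> C0 * T powr (- real DIM('a) / 2) * I"
      unfolding Tp C0_def using ineq1 \<omega> Tpos
      by (simp add: field_simps)
    have "I \<le> (\<integral>x. f x \<partial>lborel)"
      unfolding I_def
      by (rule integral_mono) (use gi int pos in \<open>auto simp: indicator_def less_imp_le\<close>)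
    hence "I \<le> 1" using one by simp
    moreover have "C0 * T powr (- real DIM('a) / 2) \<ge> 0" using C0 T by simp
    ultimately have second: "C0 * T powr (- real DIM('a) / 2) * I \<le> C0 * T powr (- real DIM('a) / 2)"
      by (simp add: mult_left_le)
    show ?thesis using first second Iset by simp
  qed
  show ?thesis using C0 main by blast
qed

end
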